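(* Let $g\mapsto g^*$ be an involution on a group $G$ and let $\sigma\colon G\to\{\pm1\}$ be a group homomorphism (orientation) which is not identically $1$; set $N=\ker\sigma$. Let $R$ be a commutative ring with $1$ and of characteristic different from $2$. For $\alpha=\sum_{g\in G}\alpha_g g\in RG$ define $\alpha^{\sharp}=\sum_{g\in G}\alpha_g\sigma(g)g^*$, and let $(RG)^-=\{\alpha\in RG\mid \alpha^{\sharp}=-\alpha\}$ be the set of skew-symmetric elements. Assume $*$ and $\sigma$ are compatible, i.e. $\sigma(g)=\sigma(g^* )$ for all $g\in G$. If the elements of $(RG)^-$ anticommute, then either (1) $\operatorname{char}R=4$, $G$ is abelian, $*$ is the identity on $N$, and $x^*\ne x$ for all $x\notin N$; or (2) $\operatorname{char}R=4$, $G$ is an SLC group with $*$ the canonical involution, and $x^*\ne x$ for all $x\notin N$. Conversely, if $G$ is a group with an index $2$ subgroup $N$ and $\sigma\colon G\to\{\pm1\}$ is the homomorphism with kernel $N$, then $(RG)^-$ is an anticommutative set in either of the situations (1) or (2).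
   Context: A group $G$ is SLC if it has a unique nonidentity commutator $s$ (necessarily central, with $s^2=1$) and the limited commutativity property: two elements $g,h\in G$ commute only if one of $g$, $h$, $gh$ is central. The canonical involution on an SLC group is $g^*=g$ if $g$ is central and $g^*=sg$ otherwise. The map $\sharp$ is an involution of $RG$ (an oriented group involution). *)

theory Defs
  imports "HOL-Algebra.Group"
begin

(* Elements of the group ring RG: finitely supported coefficient functions on carrier G *)
definition gr_elem :: "('g, 'b) monoid_scheme \<Rightarrow> ('g \<Rightarrow> 'r::comm_ring_1) \<Rightarrow> bool" where
  "gr_elem G a \<longleftrightarrow> finite {g. a g \<noteq> 0} \<and> (\<forall>g. g \<notin> carrier G \<longrightarrow> a g = 0)"

definition gr_mult :: "('g, 'b) monoid_scheme \<Rightarrow> ('g \<Rightarrow> 'r::comm_ring_1) \<Rightarrow> ('g \<Rightarrow> 'r) \<Rightarrow> 'g \<Rightarrow> 'r" where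
  "gr_mult G a b = (\<lambda>x. if x \<in> carrier G
      then (\<Sum>g\<in>{g \<in> carrier G. a g \<noteq> 0}. a g * b (inv\<^bsub>G\<^esub> g \<otimes>\<^bsub>G\<^esub> x)) else 0)"

(* a-sharp = sum_g a_g sigma(g) star(g); coefficient at x is a_(star x) sigma(star x) *)
definition gr_sharp :: "('g, 'b) monoid_scheme \<Rightarrow> ('g \<Rightarrow> 'g) \<Rightarrow> ('g \<Rightarrow> int) \<Rightarrow> ('g \<Rightarrow> 'r::comm_ring_1) \<Rightarrow> 'g \<Rightarrow> 'r" where
  "gr_sharp G star \<sigma> a = (\<lambda>x. if x \<in> carrier G then of_int (\<sigma> (star x)) * a (star x) else 0)"

definition gr_skew :: "('g, 'b) monoid_scheme \<Rightarrow> ('g \<Rightarrow> 'g) \<Rightarrow> ('g \<Rightarrow> int) \<Rightarrow> ('g \<Rightarrow> 'r::comm_ring_1) set" where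
  "gr_skew G star \<sigma> = {a. gr_elem G a \<and> gr_sharp G star \<sigma> a = (\<lambda>x. - a x)}"

definition anticommuting_set :: "('g, 'b) monoid_scheme \<Rightarrow> ('g \<Rightarrow> 'r::comm_ring_1) set \<Rightarrow> bool" where
  "anticommuting_set G S \<longleftrightarrow> (\<forall>a\<in>S. \<forall>b\<in>S. gr_mult G a b = (\<lambda>x. - gr_mult G b a x))"

definition group_involution :: "('g, 'b) monoid_scheme \<Rightarrow> ('g \<Rightarrow> 'g) \<Rightarrow> bool" where
  "group_involution G star \<longleftrightarrow> (\<forall>g\<in>carrier G. star g \<in> carrier G) \<and>
     (\<forall>g\<in>carrier G. \<forall>h\<in>carrier G. star (g \<otimes>\<^bsub>G\<^esub> h) = star h \<otimes>\<^bsub>G\<^esub> star g) \<and>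
     (\<forall>g\<in>carrier G. star (star g) = g)"

definition orientation :: "('g, 'b) monoid_scheme \<Rightarrow> ('g \<Rightarrow> int) \<Rightarrow> bool" where
  "orientation G \<sigma> \<longleftrightarrow> (\<forall>g\<in>carrier G. \<sigma> g \<in> {1, -1}) \<and>
     (\<forall>g\<in>carrier G. \<forall>h\<in>carrier G. \<sigma> (g \<otimes>\<^bsub>G\<^esub> h) = \<sigma> g * \<sigma> h)"

definition central_elem :: "('g, 'b) monoid_scheme \<Rightarrow> 'g \<Rightarrow> bool" where
  "central_elem G g \<longleftrightarrow> g \<in> carrier G \<and> (\<forall>h\<in>carrier G. g \<otimes>\<^bsub>G\<^esub> h = h \<otimes>\<^bsub>G\<^esub> g)"

definition group_commutator :: "('g, 'b) monoid_scheme \<Rightarrow> 'g \<Rightarrow> 'g \<Rightarrow> 'g" where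
  "group_commutator G g h = inv\<^bsub>G\<^esub> g \<otimes>\<^bsub>G\<^esub> inv\<^bsub>G\<^esub> h \<otimes>\<^bsub>G\<^esub> g \<otimes>\<^bsub>G\<^esub> h"

definition SLC_group :: "('g, 'b) monoid_scheme \<Rightarrow> 'g \<Rightarrow> bool" where
  "SLC_group G s \<longleftrightarrow> s \<in> carrier G \<and> s \<noteq> \<one>\<^bsub>G\<^esub> \<and>
     {group_commutator G g h | g h. g \<in> carrier G \<and> h \<in> carrier G} = {\<one>\<^bsub>G\<^esub>, s} \<and>
     (\<forall>g\<in>carrier G. \<forall>h\<in>carrier G. g \<otimes>\<^bsub>G\<^esub> h = h \<otimes>\<^bsub>G\<^esub> g \<longrightarrow>
        central_elem G g \<or> central_elem G h \<or> central_elem G (g \<otimes>\<^bsub>G\<^esub> h))"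

definition canonical_involution :: "('g, 'b) monoid_scheme \<Rightarrow> 'g \<Rightarrow> 'g \<Rightarrow> 'g" where
  "canonical_involution G s g = (if central_elem G g then g else s \<otimes>\<^bsub>G\<^esub> g)"

end

theory Submission
  imports Defs
begin



lemma pair_sum_zero:
  fixes T :: "'a \<Rightarrow> 'r::comm_ring_1"
  assumes "finite S" "\<And>x. x \<in> S \<Longrightarrow> f x \<in> S" "\<And>x. x \<in> S \<Longrightarrow> f (f x) = x"
    "\<And>x. x \<in> S \<Longrightarrow> T x + T (f x) = 0" "\<And>x. x \<in> S \<Longrightarrow> f x = x \<Longrightarrow> T x = 0"
  shows "sum T S = 0"
  using assms
proof (induction "card S" arbitrary: S rule: less_induct)
  case less
  show ?case
  proof (cases "S = {}")
    case True then show ?thesis by simp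
  next
    case False
    then obtain x where x: "x \<in> S" by blast
    show ?thesis
    proof (cases "f x = x")
      case True
      let ?S = "S - {x}"
      have cl: "y \<in> ?S \<Longrightarrow> f y \<in> ?S" for y
      proof -
        assume y: "y \<in> ?S"
        have "f y \<noteq> x" using y less.prems(3)[of y] True by auto
        then show "f y \<in> ?S" using y less.prems(2)[of y] by auto
      qed
      have lt: "card ?S < card S" using less.prems(1) x by (rule card_Diff1_less)
      have "sum T ?S = 0"
      proof (rule less.hyps[OF lt])
        show "finite ?S" using less.prems(1) by simp
        show "\<And>y. y \<in> ?S \<Longrightarrow> f y \<in> ?S" by (rule cl)
        show "\<And>y. y \<in> ?S \<Longrightarrow> f (f y) = y" using less.prems(3) by simp
        show "\<And>y. y \<in> ?S \<Longrightarrow> T y + T (f y) = 0" using less.prems(4) by simp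
        show "\<And>y. y \<in> ?S \<Longrightarrow> f y = y \<Longrightarrow> T y = 0" using less.prems(5) by simp
      qed
      moreover have "sum T S = T x + sum T ?S"
        using less.prems(1) x by (simp add: sum.remove)
      ultimately show ?thesis using less.prems(5)[OF x True] by simp
    next
      case False
      let ?S = "S - {x, f x}"
      have cl: "y \<in> ?S \<Longrightarrow> f y \<in> ?S" for y
      proof -
        assume y: "y \<in> ?S"
        have "f y \<noteq> x" using y less.prems(3)[of y] by auto
        moreover have "f y \<noteq> f x" using y less.prems(3)[of y] less.prems(3)[OF x] by (metis Diff_iff insertCI)
        ultimately show "f y \<in> ?S" using y less.prems(2)[of y] by auto
      qed
      have "card ?S < card S"
        using less.prems(1) x by (intro psubset_card_mono) auto
      have "sum T ?S = 0"
      proof (rule less.hyps[OF \<open>card ?S < card S\<close>])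
        show "finite ?S" using less.prems(1) by simp
        show "\<And>y. y \<in> ?S \<Longrightarrow> f y \<in> ?S" by (rule cl)
        show "\<And>y. y \<in> ?S \<Longrightarrow> f (f y) = y" using less.prems(3) by simp
        show "\<And>y. y \<in> ?S \<Longrightarrow> T y + T (f y) = 0" using less.prems(4) by simp
        show "\<And>y. y \<in> ?S \<Longrightarrow> f y = y \<Longrightarrow> T y = 0" using less.prems(5) by simp
      qed
      moreover have "sum T S = T x + T (f x) + sum T ?S"
      proof -
        have "sum T S = T x + sum T (S - {x})"
          using less.prems(1) x by (simp add: sum.remove)
        also have "sum T (S - {x}) = T (f x) + sum T (S - {x} - {f x})"
          using less.prems x False by (intro sum.remove) auto
        finally show ?thesis by (simp add: Diff_insert2[symmetric] add.assoc)
      qed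
      ultimately show ?thesis using less.prems(4)[OF x] by simp
    qed
  qed
qed

lemma supp_finite: "gr_elem G a \<Longrightarrow> finite {g \<in> carrier G. a g \<noteq> 0}"
  unfolding gr_elem_def by (auto intro: finite_subset)

lemma mult_sum:
  assumes "group G" "gr_elem G a" "finite S" "S \<subseteq> carrier G"
    "{g \<in> carrier G. a g \<noteq> 0} \<subseteq> S" "z \<in> carrier G"
  shows "gr_mult G a b z = (\<Sum>g\<in>S. a g * b (inv\<^bsub>G\<^esub> g \<otimes>\<^bsub>G\<^esub> z))"
proof -
  have "gr_mult G a b z = (\<Sum>g\<in>{g \<in> carrier G. a g \<noteq> 0}. a g * b (inv\<^bsub>G\<^esub> g \<otimes>\<^bsub>G\<^esub> z))"
    using assms(6) unfolding gr_mult_def by simp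
  also have "\<dots> = (\<Sum>g\<in>S. a g * b (inv\<^bsub>G\<^esub> g \<otimes>\<^bsub>G\<^esub> z))"
    by (rule sum.mono_neutral_left) (use assms in auto)
  finally show ?thesis .
qed

lemma mult_sum2:
  fixes G (structure)
  assumes grp: "group G" and "gr_elem G b" "finite S" "S \<subseteq> carrier G"
    "(\<lambda>h. inv\<^bsub>G\<^esub> h \<otimes>\<^bsub>G\<^esub> z) ` {h \<in> carrier G. b h \<noteq> 0} \<subseteq> S" and z: "z \<in> carrier G"
  shows "gr_mult G b a z = (\<Sum>g\<in>S. a g * b (z \<otimes>\<^bsub>G\<^esub> inv\<^bsub>G\<^esub> g))"
proof -
  interpret group G by (rule grp)
  let ?B = "{h \<in> carrier G. b h \<noteq> 0}"
  have inj: "inj_on (\<lambda>h. inv h \<otimes> z) ?B"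
  proof (rule inj_onI)
    fix x y assume x: "x \<in> ?B" and y: "y \<in> ?B" and e: "inv x \<otimes> z = inv y \<otimes> z"
    have xc: "x \<in> carrier G" using x by blast
    have yc: "y \<in> carrier G" using y by blast
    have "inv x = inv y" using e xc yc z by simp
    then have "inv (inv x) = inv (inv y)" by simp
    then show "x = y" using xc yc by simp
  qed
  have bk: "z \<otimes> inv (inv h \<otimes> z) = h" if hc: "h \<in> carrier G" for h
  proof -
    have "inv (inv h \<otimes> z) = inv z \<otimes> h" using hc z by (simp add: inv_mult_group)
    then have "z \<otimes> inv (inv h \<otimes> z) = z \<otimes> (inv z \<otimes> h)" by simp
    also have "\<dots> = (z \<otimes> inv z) \<otimes> h" using hc z by (subst m_assoc) auto
    also have "\<dots> = h" using hc z by simp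
    finally show ?thesis .
  qed
  have "gr_mult G b a z = (\<Sum>h\<in>?B. b h * a (inv h \<otimes> z))"
    using z unfolding gr_mult_def by simp
  also have "\<dots> = (\<Sum>g\<in>(\<lambda>h. inv h \<otimes> z) ` ?B. a g * b (z \<otimes> inv g))"
  proof (subst sum.reindex[OF inj], rule sum.cong)
    fix h assume "h \<in> ?B"
    then have "h \<in> carrier G" by blast
    then show "b h * a (inv h \<otimes> z) = ((\<lambda>g. a g * b (z \<otimes> inv g)) \<circ> (\<lambda>h. inv h \<otimes> z)) h"
      using bk[of h] by (simp add: mult.commute)
  qed simp
  also have "\<dots> = (\<Sum>g\<in>S. a g * b (z \<otimes> inv g))"
  proof (rule sum.mono_neutral_left)
    show "finite S" by fact
    show "(\<lambda>h. inv h \<otimes> z) ` ?B \<subseteq> S" by fact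
    show "\<forall>i\<in>S - (\<lambda>h. inv h \<otimes> z) ` ?B. a i * b (z \<otimes> inv i) = 0"
    proof
      fix i assume i: "i \<in> S - (\<lambda>h. inv h \<otimes> z) ` ?B"
      then have ic: "i \<in> carrier G" using assms(4) by blast
      have "b (z \<otimes> inv i) = 0"
      proof (rule ccontr)
        assume nz: "b (z \<otimes> inv i) \<noteq> 0"
        have zc: "z \<otimes> inv i \<in> carrier G" using ic z by simp
        have "inv (z \<otimes> inv i) = i \<otimes> inv z" using ic z by (simp add: inv_mult_group)
        then have "inv (z \<otimes> inv i) \<otimes> z = (i \<otimes> inv z) \<otimes> z" by simp
        also have "\<dots> = i" using ic z by (simp add: m_assoc)
        finally have "i = inv (z \<otimes> inv i) \<otimes> z" by simp
        then have "i \<in> (\<lambda>h. inv h \<otimes> z) ` ?B" using zc nz by blast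
        then show False using i by blast
      qed
      then show "a i * b (z \<otimes> inv i) = 0" by simp
    qed
  qed
  finally show ?thesis .
qed

lemma anticomm_by_pairing:
  fixes a b :: "'g \<Rightarrow> 'r::comm_ring_1" and G (structure)
  assumes grp: "group G" and ea: "gr_elem G a" and eb: "gr_elem G b" and z: "z \<in> carrier G"
    and fc: "\<And>g. g \<in> carrier G \<Longrightarrow> f g \<in> carrier G"
    and ff: "\<And>g. g \<in> carrier G \<Longrightarrow> f (f g) = g"
    and T1: "\<And>g. g \<in> carrier G \<Longrightarrow>
        a g * (b (inv\<^bsub>G\<^esub> g \<otimes>\<^bsub>G\<^esub> z) + b (z \<otimes>\<^bsub>G\<^esub> inv\<^bsub>G\<^esub> g))
      + a (f g) * (b (inv\<^bsub>G\<^esub> (f g) \<otimes>\<^bsub>G\<^esub> z) + b (z \<otimes>\<^bsub>G\<^esub> inv\<^bsub>G\<^esub> (f g))) = 0"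
    and T2: "\<And>g. g \<in> carrier G \<Longrightarrow> f g = g \<Longrightarrow>
        a g * (b (inv\<^bsub>G\<^esub> g \<otimes>\<^bsub>G\<^esub> z) + b (z \<otimes>\<^bsub>G\<^esub> inv\<^bsub>G\<^esub> g)) = 0"
  shows "gr_mult G a b z + gr_mult G b a z = 0"
proof -
  interpret group G by (rule grp)
  let ?SA = "{g \<in> carrier G. a g \<noteq> 0} \<union> (\<lambda>h. inv h \<otimes> z) ` {h \<in> carrier G. b h \<noteq> 0}"
  let ?S = "?SA \<union> f ` ?SA"
  have S0c: "?SA \<subseteq> carrier G" using z by blast
  have fin: "finite ?S" using supp_finite[OF ea] supp_finite[OF eb] by simp
  have Sc: "?S \<subseteq> carrier G"
  proof
    fix x assume "x \<in> ?S"
    then show "x \<in> carrier G"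
    proof
      assume "x \<in> ?SA" then show ?thesis using S0c by blast
    next
      assume "x \<in> f ` ?SA"
      then obtain y where "y \<in> ?SA" "x = f y" by blast
      then show ?thesis using S0c fc by blast
    qed
  qed
  have "gr_mult G a b z + gr_mult G b a z =
      (\<Sum>g\<in>?S. a g * b (inv g \<otimes> z)) + (\<Sum>g\<in>?S. a g * b (z \<otimes> inv g))"
    by (subst mult_sum[OF grp ea fin Sc _ z], blast, subst mult_sum2[OF grp eb fin Sc _ z], blast, rule refl)
  also have "\<dots> = (\<Sum>g\<in>?S. a g * (b (inv g \<otimes> z) + b (z \<otimes> inv g)))"
    by (simp add: sum.distrib distrib_left)
  also have "\<dots> = 0"
  proof (rule pair_sum_zero[where f = f])
    show "finite ?S" by fact
    show "\<And>x. x \<in> ?S \<Longrightarrow> f x \<in> ?S"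
    proof -
      fix x assume x: "x \<in> ?S"
      show "f x \<in> ?S"
      proof (cases "x \<in> ?SA")
        case True then show ?thesis by blast
      next
        case False
        then obtain y where y: "y \<in> ?SA" "x = f y" using x by blast
        then have "f x = y" using ff S0c by auto
        then show ?thesis using y by blast
      qed
    qed
    show "\<And>x. x \<in> ?S \<Longrightarrow> f (f x) = x" using ff Sc by blast
    show "\<And>x. x \<in> ?S \<Longrightarrow> a x * (b (inv x \<otimes> z) + b (z \<otimes> inv x)) +
        a (f x) * (b (inv (f x) \<otimes> z) + b (z \<otimes> inv (f x))) = 0" using T1 Sc by blast
    show "\<And>x. x \<in> ?S \<Longrightarrow> f x = x \<Longrightarrow> a x * (b (inv x \<otimes> z) + b (z \<otimes> inv x)) = 0"
      using T2 Sc by blast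
  qed
  finally show ?thesis .
qed




locale ictx = group G for G (structure) +
  fixes star :: "'a \<Rightarrow> 'a" and \<sigma> :: "'a \<Rightarrow> int" and N :: "'a set"
  assumes invol: "group_involution G star" and ori: "orientation G \<sigma>"
    and Ndef: "N = {g \<in> carrier G. \<sigma> g = 1}"
    and compat: "\<forall>g\<in>carrier G. \<sigma> (star g) = \<sigma> g"
begin

lemma star_closed [simp]: "g \<in> carrier G \<Longrightarrow> star g \<in> carrier G"
  using invol unfolding group_involution_def by blast
lemma star_mult: "g \<in> carrier G \<Longrightarrow> h \<in> carrier G \<Longrightarrow> star (g \<otimes> h) = star h \<otimes> star g"
  using invol unfolding group_involution_def by blast
lemma star_star [simp]: "g \<in> carrier G \<Longrightarrow> star (star g) = g"
  using invol unfolding group_involution_def by blast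
lemma star_one [simp]: "star \<one> = \<one>"
proof -
  have "star \<one> = star \<one> \<otimes> star \<one>" using star_mult[of \<one> \<one>] by simp
  then show ?thesis by (metis l_cancel_one one_closed star_closed)
qed
lemma star_inv: "g \<in> carrier G \<Longrightarrow> star (inv g) = inv (star g)"
proof -
  assume g: "g \<in> carrier G"
  have "star (inv g) \<otimes> star g = \<one>" using star_mult[of g "inv g"] g by simp
  then have "inv (star g) = star (inv g)" using g by (intro inv_equality) auto
  then show ?thesis by simp
qed
lemma sig_pm: "g \<in> carrier G \<Longrightarrow> \<sigma> g = 1 \<or> \<sigma> g = -1"
  using ori unfolding orientation_def by blast
lemma sig_mult: "g \<in> carrier G \<Longrightarrow> h \<in> carrier G \<Longrightarrow> \<sigma> (g \<otimes> h) = \<sigma> g * \<sigma> h"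
  using ori unfolding orientation_def by blast
lemma sig_one [simp]: "\<sigma> \<one> = 1"
proof -
  have "\<sigma> \<one> = \<sigma> \<one> * \<sigma> \<one>" using sig_mult[of \<one> \<one>] by simp
  then show ?thesis using sig_pm[of \<one>] by auto
qed
lemma sig_inv: "g \<in> carrier G \<Longrightarrow> \<sigma> (inv g) = \<sigma> g"
proof -
  assume g: "g \<in> carrier G"
  have "\<sigma> g * \<sigma> (inv g) = 1" using sig_mult[of g "inv g"] g by simp
  then show ?thesis using sig_pm[OF g] sig_pm[of "inv g"] g by auto
qed
lemma sig_star: "g \<in> carrier G \<Longrightarrow> \<sigma> (star g) = \<sigma> g"
  using compat by blast
lemma notN: "g \<in> carrier G \<Longrightarrow> g \<notin> N \<longleftrightarrow> \<sigma> g = -1"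
  using sig_pm[of g] Ndef by auto
lemma inN: "g \<in> N \<longleftrightarrow> g \<in> carrier G \<and> \<sigma> g = 1"
  using Ndef by auto

lemma skew_eq:
  assumes "a \<in> gr_skew G star \<sigma>" "w \<in> carrier G"
  shows "of_int (\<sigma> w) * a (star w) = - a w"
proof -
  have "gr_sharp G star \<sigma> a w = - a w" using assms(1) unfolding gr_skew_def by (metis (mono_tags) mem_Collect_eq)
  then show ?thesis using assms(2) sig_star[OF assms(2)] unfolding gr_sharp_def by simp
qed

lemma skew_elem: "a \<in> gr_skew G star \<sigma> \<Longrightarrow> gr_elem G a"
  unfolding gr_skew_def by blast

lemma skew_fixN:
  assumes "a \<in> gr_skew G star \<sigma>" "w \<in> carrier G" "\<sigma> w = 1" "star w = w"
  shows "a w + a w = 0"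
  using skew_eq[OF assms(1,2)] assms(3,4) by (simp add: eq_neg_iff_add_eq_0)

lemma skew_pair:
  fixes a :: "'a \<Rightarrow> 'r::comm_ring_1"
  assumes "a \<in> gr_skew G star \<sigma>" "w \<in> carrier G"
  shows "a (star w) = - of_int (\<sigma> w) * a w"
proof -
  have e: "of_int (\<sigma> w) * a (star w) = - a w" by (rule skew_eq[OF assms])
  have "of_int (\<sigma> w) * of_int (\<sigma> w) = (1::'r)"
    using sig_pm[OF assms(2)] by auto
  then have "a (star w) = of_int (\<sigma> w) * (of_int (\<sigma> w) * a (star w))"
    by (simp add: mult.assoc[symmetric])
  then show ?thesis using e by simp
qed

end



context ictx begin

lemma anticomm_from_pointwise:
  assumes "\<And>a b z. a \<in> S \<Longrightarrow> b \<in> S \<Longrightarrow> z \<in> carrier G \<Longrightarrow> gr_mult G a b z + gr_mult G b a z = 0"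
  shows "anticommuting_set G S"
  unfolding anticommuting_set_def
proof (intro ballI ext)
  fix a b x assume a: "a \<in> S" and b: "b \<in> S"
  show "gr_mult G a b x = - gr_mult G b a x"
  proof (cases "x \<in> carrier G")
    case True
    then show ?thesis using assms[OF a b True] by (simp add: eq_neg_iff_add_eq_0)
  next
    case False
    then show ?thesis unfolding gr_mult_def by simp
  qed
qed

lemma conv1:
  fixes dummy :: "'r::comm_ring_1"
  assumes four: "(4::'r) = 0" and cg: "comm_group G" and idN: "\<forall>x\<in>N. star x = x"
    and nfix: "\<forall>x\<in>carrier G - N. star x \<noteq> x"
  shows "anticommuting_set G (gr_skew G star \<sigma> :: ('a \<Rightarrow> 'r) set)"
proof (rule anticomm_from_pointwise)
  interpret cg: comm_group G by (rule cg)
  fix a b :: "'a \<Rightarrow> 'r" and z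
  assume a: "a \<in> gr_skew G star \<sigma>" and b: "b \<in> gr_skew G star \<sigma>" and z: "z \<in> carrier G"
  have aN: "a w + a w = 0" if "w \<in> carrier G" "\<sigma> w = 1" for w
    using skew_fixN[OF a that] idN that inN by blast
  have bN: "b w + b w = 0" if "w \<in> carrier G" "\<sigma> w = 1" for w
    using skew_fixN[OF b that] idN that inN by blast
  have aS: "a (star w) = a w" if "w \<in> carrier G" "\<sigma> w = -1" for w
    using skew_pair[OF a that(1)] that(2) by simp
  have bS: "b (star w) = b w" if "w \<in> carrier G" "\<sigma> w = -1" for w
    using skew_pair[OF b that(1)] that(2) by simp
  let ?T = "\<lambda>g. a g * (b (inv g \<otimes> z) + b (z \<otimes> inv g))"
  have Tc: "?T g = a g * (b (inv g \<otimes> z) + b (inv g \<otimes> z))" if "g \<in> carrier G" for g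
    using that z cg.m_comm[of z "inv g"] by simp
  have T0: "?T g = 0" if g: "g \<in> carrier G" and h: "\<sigma> g = 1 \<or> \<sigma> (inv g \<otimes> z) = 1" for g
  proof -
    have y: "inv g \<otimes> z \<in> carrier G" using g z by simp
    show ?thesis
    proof (cases "\<sigma> g = 1")
      case True
      have "?T g = (a g + a g) * b (inv g \<otimes> z)" using Tc[OF g] by (simp add: algebra_simps)
      then show ?thesis using aN[OF g True] by simp
    next
      case False
      then have "\<sigma> (inv g \<otimes> z) = 1" using h by blast
      then show ?thesis using Tc[OF g] bN[OF y] by simp
    qed
  qed
  show "gr_mult G a b z + gr_mult G b a z = 0"
  proof (rule anticomm_by_pairing[where f = star])
    show "group G" by (rule is_group)
    show "gr_elem G a" "gr_elem G b" using a b by (auto intro: skew_elem)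
    show "z \<in> carrier G" by fact
    show "\<And>g. g \<in> carrier G \<Longrightarrow> star g \<in> carrier G" by simp
    show "\<And>g. g \<in> carrier G \<Longrightarrow> star (star g) = g" by simp
    show "\<And>g. g \<in> carrier G \<Longrightarrow> star g = g \<Longrightarrow> ?T g = 0"
    proof -
      fix g assume g: "g \<in> carrier G" and e: "star g = g"
      then have "\<sigma> g = 1" using nfix notN[OF g] sig_pm[OF g] by auto
      then show "?T g = 0" using T0 g by blast
    qed
    show "\<And>g. g \<in> carrier G \<Longrightarrow> ?T g + ?T (star g) = 0"
    proof -
      fix g assume g: "g \<in> carrier G"
      have sg: "star g \<in> carrier G" using g by simp
      have y: "inv g \<otimes> z \<in> carrier G" using g z by simp
      have sy: "\<sigma> (inv (star g) \<otimes> z) = \<sigma> (inv g \<otimes> z)"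
        using g z by (simp add: sig_mult sig_inv sig_star)
      show "?T g + ?T (star g) = 0"
      proof (cases "\<sigma> g = 1 \<or> \<sigma> (inv g \<otimes> z) = 1")
        case True
        have "\<sigma> (star g) = 1 \<or> \<sigma> (inv (star g) \<otimes> z) = 1" using True sy sig_star[OF g] by simp
        then show ?thesis using T0[OF g True] T0[OF sg] by simp
      next
        case False
        then have sg1: "\<sigma> g = -1" and sy1: "\<sigma> (inv g \<otimes> z) = -1"
          using sig_pm[OF g] sig_pm[OF y] by auto
        have "\<sigma> z = 1"
        proof -
          have "z = g \<otimes> (inv g \<otimes> z)" using g z by (simp add: m_assoc[symmetric])
          then have "\<sigma> z = \<sigma> g * \<sigma> (inv g \<otimes> z)" using sig_mult[OF g y] by simp
          then show ?thesis using sg1 sy1 by simp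
        qed
        then have zs: "star z = z" using idN z inN by blast
        have "inv (star g) \<otimes> z = star (inv g \<otimes> z)"
          using g z zs by (simp add: star_mult star_inv cg.m_comm)
        then have "?T (star g) = a g * (b (inv g \<otimes> z) + b (inv g \<otimes> z))"
          using Tc[OF sg] aS[OF g sg1] bS[OF y sy1] by simp
        then have "?T g + ?T (star g) = 4 * (a g * b (inv g \<otimes> z))"
          using Tc[OF g] by (simp add: algebra_simps)
        then show ?thesis using four by simp
      qed
    qed
  qed
qed

end



context group begin

lemma comm_decomp:
  assumes "u \<in> carrier G" "v \<in> carrier G"
  shows "u \<otimes> v = (v \<otimes> u) \<otimes> group_commutator G u v"
proof -
  have "group_commutator G u v = inv (v \<otimes> u) \<otimes> (u \<otimes> v)"
    using assms unfolding group_commutator_def by (simp add: inv_mult_group m_assoc)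
  moreover have c: "group_commutator G u v \<in> carrier G"
    using assms unfolding group_commutator_def by simp
  moreover have "group_commutator G u v = inv (v \<otimes> u) \<otimes> (u \<otimes> v) \<longleftrightarrow>
      u \<otimes> v = (v \<otimes> u) \<otimes> group_commutator G u v"
    by (rule inv_solve_left) (use assms c in auto)
  ultimately show ?thesis by blast
qed

lemma SLC_facts:
  assumes slc: "SLC_group G s"
  shows "s \<in> carrier G" "s \<noteq> \<one>"
    and SLC_comm: "\<And>u v. u \<in> carrier G \<Longrightarrow> v \<in> carrier G \<Longrightarrow> u \<otimes> v = v \<otimes> u \<or> u \<otimes> v = (v \<otimes> u) \<otimes> s"
    and SLC_central: "\<And>h. h \<in> carrier G \<Longrightarrow> s \<otimes> h = h \<otimes> s"
    and SLC_sq: "s \<otimes> s = \<one>"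
    and SLC_LC: "\<And>g h. g \<in> carrier G \<Longrightarrow> h \<in> carrier G \<Longrightarrow> g \<otimes> h = h \<otimes> g \<Longrightarrow>
        central_elem G g \<or> central_elem G h \<or> central_elem G (g \<otimes> h)"
proof -
  have sc: "s \<in> carrier G" and s1: "s \<noteq> \<one>"
    and cs: "{group_commutator G g h | g h. g \<in> carrier G \<and> h \<in> carrier G} = {\<one>, s}"
    using slc unfolding SLC_group_def by blast+
  show "s \<in> carrier G" "s \<noteq> \<one>" by fact+
  show "\<And>g h. g \<in> carrier G \<Longrightarrow> h \<in> carrier G \<Longrightarrow> g \<otimes> h = h \<otimes> g \<Longrightarrow>
        central_elem G g \<or> central_elem G h \<or> central_elem G (g \<otimes> h)"
    using slc unfolding SLC_group_def by blast
  have cm: "u \<otimes> v = v \<otimes> u \<or> u \<otimes> v = (v \<otimes> u) \<otimes> s" if "u \<in> carrier G" "v \<in> carrier G" for u v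
  proof -
    have "group_commutator G u v \<in> {\<one>, s}" using that cs by blast
    then show ?thesis using comm_decomp[OF that] that by auto
  qed
  show "\<And>u v. u \<in> carrier G \<Longrightarrow> v \<in> carrier G \<Longrightarrow> u \<otimes> v = v \<otimes> u \<or> u \<otimes> v = (v \<otimes> u) \<otimes> s"
    by (rule cm)
  show "\<And>h. h \<in> carrier G \<Longrightarrow> s \<otimes> h = h \<otimes> s"
  proof -
    fix h assume h: "h \<in> carrier G"
    have "h \<otimes> s = s \<otimes> h \<or> h \<otimes> s = (s \<otimes> h) \<otimes> s" by (rule cm[OF h sc])
    moreover have "h \<otimes> s \<noteq> (s \<otimes> h) \<otimes> s"
    proof
      assume "h \<otimes> s = (s \<otimes> h) \<otimes> s"
      then have "h = s \<otimes> h" using h sc by simp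
      then show False using h sc s1 by (metis r_cancel_one')
    qed
    ultimately show "s \<otimes> h = h \<otimes> s" by simp
  qed
  have "s \<in> {group_commutator G g h | g h. g \<in> carrier G \<and> h \<in> carrier G}" using cs by blast
  then obtain a b where ab: "a \<in> carrier G" "b \<in> carrier G" "group_commutator G a b = s"
    by blast
  have ne: "a \<otimes> b \<noteq> b \<otimes> a"
  proof
    assume e: "a \<otimes> b = b \<otimes> a"
    have "a \<otimes> b = (a \<otimes> b) \<otimes> s" using comm_decomp[OF ab(1,2)] ab(3) e by simp
    then show False using ab sc s1 by (metis l_cancel_one' m_closed)
  qed
  have e1: "a \<otimes> b = (b \<otimes> a) \<otimes> s" using cm[OF ab(1,2)] ne by blast
  have e2: "b \<otimes> a = (a \<otimes> b) \<otimes> s" using cm[OF ab(2,1)] ne by metis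
  have "a \<otimes> b = (a \<otimes> b) \<otimes> (s \<otimes> s)" using e1 e2 ab sc by (simp add: m_assoc)
  then show "s \<otimes> s = \<one>" using ab sc by (metis l_cancel_one' m_closed)
qed

end



context ictx begin

lemma conv2:
  fixes dummy :: "'r::comm_ring_1"
  assumes four: "(4::'r) = 0" and slc: "SLC_group G s"
    and can: "\<forall>g\<in>carrier G. star g = canonical_involution G s g"
    and nfix: "\<forall>x\<in>carrier G - N. star x \<noteq> x"
  shows "anticommuting_set G (gr_skew G star \<sigma> :: ('a \<Rightarrow> 'r) set)"
proof (rule anticomm_from_pointwise)
  have sc: "s \<in> carrier G" and s1: "s \<noteq> \<one>" and scen: "\<And>h. h \<in> carrier G \<Longrightarrow> s \<otimes> h = h \<otimes> s"
    and ss: "s \<otimes> s = \<one>"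
    using SLC_facts(1) SLC_facts(2) SLC_facts(4) SLC_facts(5) slc by blast+
  have cm: "\<And>u v. u \<in> carrier G \<Longrightarrow> v \<in> carrier G \<Longrightarrow> u \<otimes> v = v \<otimes> u \<or> u \<otimes> v = (v \<otimes> u) \<otimes> s"
    using SLC_facts(3)[OF slc] by blast
  have LC: "\<And>g h. g \<in> carrier G \<Longrightarrow> h \<in> carrier G \<Longrightarrow> g \<otimes> h = h \<otimes> g \<Longrightarrow>
        central_elem G g \<or> central_elem G h \<or> central_elem G (g \<otimes> h)"
    using SLC_facts(6)[OF slc] by blast
  have sss: "s \<otimes> (s \<otimes> w) = w" if "w \<in> carrier G" for w
    using that sc ss by (simp add: m_assoc[symmetric])
  have cen_s: "central_elem G (s \<otimes> w) \<longleftrightarrow> central_elem G w" if w: "w \<in> carrier G" for w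
  proof
    assume c: "central_elem G (s \<otimes> w)"
    show "central_elem G w" unfolding central_elem_def
    proof (intro conjI ballI)
      show "w \<in> carrier G" by fact
      fix h assume h: "h \<in> carrier G"
      have "(s \<otimes> w) \<otimes> h = h \<otimes> (s \<otimes> w)" using c h unfolding central_elem_def by blast
      then have "s \<otimes> (w \<otimes> h) = s \<otimes> (h \<otimes> w)" using w h sc scen[OF h]
        by (metis m_assoc)
      then show "w \<otimes> h = h \<otimes> w" using w h sc by simp
    qed
  next
    assume c: "central_elem G w"
    show "central_elem G (s \<otimes> w)" unfolding central_elem_def
    proof (intro conjI ballI)
      show "s \<otimes> w \<in> carrier G" using w sc by simp
      fix h assume h: "h \<in> carrier G"
      have "w \<otimes> h = h \<otimes> w" using c h unfolding central_elem_def by blast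
      then show "(s \<otimes> w) \<otimes> h = h \<otimes> (s \<otimes> w)" using w h sc scen[OF h]
        by (metis m_assoc)
    qed
  qed
  have st_c: "star w = w" if "w \<in> carrier G" "central_elem G w" for w
    using can that unfolding canonical_involution_def by simp
  have st_n: "star w = s \<otimes> w" if "w \<in> carrier G" "\<not> central_elem G w" for w
    using can that unfolding canonical_involution_def by simp
  have cenN: "\<sigma> w = 1" if "w \<in> carrier G" "central_elem G w" for w
    using nfix st_c[OF that] that(1) notN[OF that(1)] sig_pm[OF that(1)] by auto
  fix a b :: "'a \<Rightarrow> 'r" and z
  assume a: "a \<in> gr_skew G star \<sigma>" and b: "b \<in> gr_skew G star \<sigma>" and z: "z \<in> carrier G"
  have aC: "a w + a w = 0" if "w \<in> carrier G" "central_elem G w" for w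
    using skew_fixN[OF a that(1) cenN[OF that] st_c[OF that]] .
  have bC: "b w + b w = 0" if "w \<in> carrier G" "central_elem G w" for w
    using skew_fixN[OF b that(1) cenN[OF that] st_c[OF that]] .
  have aS: "a (s \<otimes> w) = - of_int (\<sigma> w) * a w" if "w \<in> carrier G" "\<not> central_elem G w" for w
    using skew_pair[OF a that(1)] st_n[OF that] by simp
  have bS: "b (s \<otimes> w) = - of_int (\<sigma> w) * b w" if "w \<in> carrier G" "\<not> central_elem G w" for w
    using skew_pair[OF b that(1)] st_n[OF that] by simp
  let ?T = "\<lambda>g. a g * (b (inv g \<otimes> z) + b (z \<otimes> inv g))"
  have zdec: "z = g \<otimes> (inv g \<otimes> z)" if "g \<in> carrier G" for g
    using that z by (simp add: m_assoc[symmetric])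
  have Tc: "?T g = a g * (b (inv g \<otimes> z) + b (inv g \<otimes> z))"
    if g: "g \<in> carrier G" and e: "g \<otimes> (inv g \<otimes> z) = (inv g \<otimes> z) \<otimes> g" for g
  proof -
    have "z \<otimes> inv g = (inv g \<otimes> z) \<otimes> g \<otimes> inv g" using zdec[OF g] e by simp
    also have "\<dots> = inv g \<otimes> z" using g z by (simp add: m_assoc)
    finally show ?thesis by simp
  qed
  have Tn: "?T g = a g * (b (inv g \<otimes> z) + b (s \<otimes> (inv g \<otimes> z)))"
    if g: "g \<in> carrier G" and e: "g \<otimes> (inv g \<otimes> z) = ((inv g \<otimes> z) \<otimes> g) \<otimes> s" for g
  proof -
    have "z \<otimes> inv g = ((inv g \<otimes> z) \<otimes> g) \<otimes> s \<otimes> inv g" using zdec[OF g] e by simp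
    also have "\<dots> = (inv g \<otimes> z) \<otimes> (g \<otimes> (s \<otimes> inv g))" using g z sc by (simp add: m_assoc)
    also have "\<dots> = (inv g \<otimes> z) \<otimes> (g \<otimes> (inv g \<otimes> s))" using scen[of "inv g"] g by simp
    also have "\<dots> = (inv g \<otimes> z) \<otimes> s" using g sc by (simp add: m_assoc[symmetric])
    also have "\<dots> = s \<otimes> (inv g \<otimes> z)" using scen[of "inv g \<otimes> z"] g z by simp
    finally show ?thesis by simp
  qed
  show "gr_mult G a b z + gr_mult G b a z = 0"
  proof (rule anticomm_by_pairing[where f = "\<lambda>g. s \<otimes> g"])
    show "group G" by (rule is_group)
    show "gr_elem G a" "gr_elem G b" using a b by (auto intro: skew_elem)
    show "z \<in> carrier G" by fact
    show "\<And>g. g \<in> carrier G \<Longrightarrow> s \<otimes> g \<in> carrier G" using sc by simp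
    show "\<And>g. g \<in> carrier G \<Longrightarrow> s \<otimes> (s \<otimes> g) = g" by (rule sss)
    show "\<And>g. g \<in> carrier G \<Longrightarrow> s \<otimes> g = g \<Longrightarrow> ?T g = 0"
      using sc s1 by (metis r_cancel_one)
    show "\<And>g. g \<in> carrier G \<Longrightarrow> ?T g + ?T (s \<otimes> g) = 0"
    proof -
      fix g assume g: "g \<in> carrier G"
      define y where "y = inv g \<otimes> z"
      have y: "y \<in> carrier G" using g z y_def by simp
      have sg: "s \<otimes> g \<in> carrier G" using g sc by simp
      have sy: "s \<otimes> y \<in> carrier G" using y sc by simp
      have y': "inv (s \<otimes> g) \<otimes> z = s \<otimes> y"
      proof -
        have "inv (s \<otimes> g) \<otimes> z = inv g \<otimes> (inv s \<otimes> z)" using g sc z by (simp add: inv_mult_group m_assoc)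
        also have "inv s = s" using ss sc by (metis inv_equality)
        also have "inv g \<otimes> (s \<otimes> z) = s \<otimes> y" using y_def scen[of "inv g"] g z sc by (metis inv_closed m_assoc)
        finally show ?thesis .
      qed
      have comm_iff: "(s \<otimes> g) \<otimes> (s \<otimes> y) = (s \<otimes> y) \<otimes> (s \<otimes> g) \<longleftrightarrow> g \<otimes> y = y \<otimes> g"
      proof -
        have "(s \<otimes> g) \<otimes> (s \<otimes> y) = (s \<otimes> s) \<otimes> (g \<otimes> y)" using g y sc scen[OF g] by (metis m_assoc m_closed)
        moreover have "(s \<otimes> y) \<otimes> (s \<otimes> g) = (s \<otimes> s) \<otimes> (y \<otimes> g)" using g y sc scen[OF y] by (metis m_assoc m_closed)
        ultimately show ?thesis using ss g y by simp
      qed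
      have comm2: "(s \<otimes> g) \<otimes> (s \<otimes> y) = ((s \<otimes> y) \<otimes> (s \<otimes> g)) \<otimes> s" if e: "g \<otimes> y = (y \<otimes> g) \<otimes> s"
      proof -
        have "(s \<otimes> g) \<otimes> (s \<otimes> y) = (s \<otimes> s) \<otimes> (g \<otimes> y)" using g y sc scen[OF g] by (metis m_assoc m_closed)
        moreover have "(s \<otimes> y) \<otimes> (s \<otimes> g) = (s \<otimes> s) \<otimes> (y \<otimes> g)" using g y sc scen[OF y] by (metis m_assoc m_closed)
        ultimately show ?thesis using ss g y e sc by simp
      qed
      show "?T g + ?T (s \<otimes> g) = 0"
      proof (cases "g \<otimes> y = y \<otimes> g")
        case True
        have T1: "?T g = a g * (b y + b y)" using Tc[OF g] True y_def by simp
        have T2: "?T (s \<otimes> g) = a (s \<otimes> g) * (b (s \<otimes> y) + b (s \<otimes> y))"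
          using Tc[OF sg] comm_iff True y' by simp
        show ?thesis
        proof (cases "central_elem G g")
          case True
          have "?T g = (a g + a g) * b y" using T1 by (simp add: distrib_left distrib_right)
          then have "?T g = 0" using aC[OF g True] by simp
          moreover have "?T (s \<otimes> g) = (a (s \<otimes> g) + a (s \<otimes> g)) * b (s \<otimes> y)"
            using T2 by (simp add: distrib_left distrib_right)
          then have "?T (s \<otimes> g) = 0" using aC[OF sg] cen_s[OF g] True by simp
          ultimately show ?thesis by simp
        next
          case gn: False
          show ?thesis
          proof (cases "central_elem G y")
            case True
            have "?T g = 0" using T1 bC[OF y True] by simp
            moreover have "?T (s \<otimes> g) = 0" using T2 bC[OF sy] cen_s[OF y] True by simp
            ultimately show ?thesis by simp
          next
            case yn: False
            have "central_elem G (g \<otimes> y)" using LC[OF g y \<open>g \<otimes> y = y \<otimes> g\<close>] gn yn by blast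
            then have "\<sigma> (g \<otimes> y) = 1" using cenN g y by simp
            then have sgy: "\<sigma> g * \<sigma> y = 1" using sig_mult[OF g y] by simp
            have "?T (s \<otimes> g) = (of_int (\<sigma> g * \<sigma> y)) * (a g * (b y + b y))"
              using T2 aS[OF g gn] bS[OF y yn] by (simp add: algebra_simps)
            then have "?T (s \<otimes> g) = ?T g" using sgy T1 by simp
            then have "?T g + ?T (s \<otimes> g) = 4 * (a g * b y)" using T1 by (simp add: algebra_simps)
            then show ?thesis using four by simp
          qed
        qed
      next
        case False
        then have e: "g \<otimes> y = (y \<otimes> g) \<otimes> s" using cm[OF g y] by blast
        have gn: "\<not> central_elem G g" using False y unfolding central_elem_def by blast
        have yn: "\<not> central_elem G y" using False g unfolding central_elem_def by metis
        have T1: "?T g = a g * (b y + b (s \<otimes> y))" using Tn[OF g] e y_def by simp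
        have T2: "?T (s \<otimes> g) = a (s \<otimes> g) * (b (s \<otimes> y) + b y)"
          using Tn[OF sg] comm2[OF e] y' sss[OF y] by simp
        have "?T g + ?T (s \<otimes> g) = (a g + a (s \<otimes> g)) * (b y + b (s \<otimes> y))"
          using T1 T2 by (simp add: algebra_simps)
        also have "\<dots> = ((1 - of_int (\<sigma> g)) * a g) * ((1 - of_int (\<sigma> y)) * b y)"
          using aS[OF g gn] bS[OF y yn] by (simp add: algebra_simps)
        also have "\<dots> = 0"
        proof -
          have "\<sigma> g = 1 \<or> \<sigma> g = -1" "\<sigma> y = 1 \<or> \<sigma> y = -1" using sig_pm g y by auto
          then show ?thesis
          proof (elim disjE)
            assume "\<sigma> g = -1" "\<sigma> y = -1"
            then show ?thesis using four by (simp add: algebra_simps)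
          qed simp_all
        qed
        finally show ?thesis .
      qed
    qed
  qed
qed

end



definition ind2 :: "'a \<Rightarrow> 'a \<Rightarrow> 'a \<Rightarrow> 'r::comm_ring_1" where
  "ind2 u v = (\<lambda>g. of_bool (g = u \<or> g = v))"

lemma mult_ind2:
  fixes G (structure) and \<beta> :: "'a \<Rightarrow> 'r::comm_ring_1"
  assumes "u \<in> carrier G" "v \<in> carrier G" "u \<noteq> v" "z \<in> carrier G"
  shows "gr_mult G (ind2 u v) \<beta> z = \<beta> (inv u \<otimes> z) + \<beta> (inv v \<otimes> z)"
proof -
  have S: "{g \<in> carrier G. (ind2 u v g :: 'r) \<noteq> 0} = {u, v}"
    using assms unfolding ind2_def by auto
  show ?thesis using assms unfolding gr_mult_def S by (simp add: ind2_def)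
qed

lemma mult_ind1:
  fixes G (structure) and \<beta> :: "'a \<Rightarrow> 'r::comm_ring_1"
  assumes "u \<in> carrier G" "z \<in> carrier G"
  shows "gr_mult G (ind2 u u) \<beta> z = \<beta> (inv u \<otimes> z)"
proof -
  have S: "{g \<in> carrier G. (ind2 u u g :: 'r) \<noteq> 0} = {u}"
    using assms unfolding ind2_def by auto
  show ?thesis using assms unfolding gr_mult_def S by (simp add: ind2_def)
qed

context ictx begin

lemma ind2_skew:
  assumes x: "x \<in> carrier G" and sx: "\<sigma> x = -1"
  shows "(ind2 x (star x) :: 'a \<Rightarrow> 'r::comm_ring_1) \<in> gr_skew G star \<sigma>"
  unfolding gr_skew_def
proof (intro CollectI conjI)
  show "gr_elem G (ind2 x (star x) :: 'a \<Rightarrow> 'r)"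
    unfolding gr_elem_def ind2_def
  proof (intro conjI allI impI)
    show "finite {g. (of_bool (g = x \<or> g = star x) :: 'r) \<noteq> 0}"
      by (rule finite_subset[of _ "{x, star x}"]) auto
    fix g assume "g \<notin> carrier G"
    then show "(of_bool (g = x \<or> g = star x) :: 'r) = 0" using x by auto
  qed
  show "gr_sharp G star \<sigma> (ind2 x (star x)) = (\<lambda>w. - (ind2 x (star x) w :: 'r))"
  proof (rule ext)
    fix w
    show "gr_sharp G star \<sigma> (ind2 x (star x)) w = - (ind2 x (star x) w :: 'r)"
    proof (cases "w \<in> carrier G")
      case False
      then show ?thesis unfolding gr_sharp_def ind2_def using x by auto
    next
      case w: True
      have iff: "(star w = x \<or> star w = star x) \<longleftrightarrow> (w = x \<or> w = star x)"
        using w x by (metis star_star)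
      show ?thesis
      proof (cases "w = x \<or> w = star x")
        case True
        then have "\<sigma> (star w) = -1" using sx x w sig_star by auto
        then show ?thesis unfolding gr_sharp_def ind2_def using w True iff by simp
      next
        case False
        then show ?thesis unfolding gr_sharp_def ind2_def using w iff by simp
      qed
    qed
  qed
qed

lemma two_ne:
  assumes "CHAR('r::comm_ring_1) \<noteq> 2"
  shows "(2::'r) \<noteq> 0"
proof
  assume "(2::'r) = 0"
  then have "of_nat 2 = (0::'r)" by simp
  then have "CHAR('r) dvd 2" using of_nat_eq_0_iff_char_dvd[of 2, where 'a='r] by simp
  moreover have "CHAR('r) \<noteq> 0"
  proof
    assume "CHAR('r) = 0" then show False using \<open>CHAR('r) dvd 2\<close> by simp
  qed
  ultimately have "CHAR('r) \<le> 2" "CHAR('r) \<noteq> 0" using dvd_imp_le[of "CHAR('r)" 2] by auto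
  then show False using assms CHAR_not_1[where 'a='r] by linarith
qed

lemma anti_at:
  assumes "anticommuting_set G S" "a \<in> S" "b \<in> S"
  shows "gr_mult G a b z + gr_mult G b a z = 0"
proof -
  have "gr_mult G a b = (\<lambda>x. - gr_mult G b a x)" using assms unfolding anticommuting_set_def by blast
  then have "gr_mult G a b z = - gr_mult G b a z" by (rule fun_cong[where x = z, THEN trans]) simp
  then show ?thesis by simp
qed

lemma F1:
  assumes ac: "anticommuting_set G (gr_skew G star \<sigma> :: ('a \<Rightarrow> 'r::comm_ring_1) set)"
    and ch: "CHAR('r) \<noteq> 2"
    and x: "x \<in> carrier G" and sx: "\<sigma> x = -1"
  shows "star x \<noteq> x"
proof
  assume e: "star x = x"
  let ?a = "ind2 x x :: 'a \<Rightarrow> 'r"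
  have sk: "?a \<in> gr_skew G star \<sigma>" using ind2_skew[OF x sx] e by simp
  have xx: "x \<otimes> x \<in> carrier G" using x by simp
  have "gr_mult G ?a ?a (x \<otimes> x) + gr_mult G ?a ?a (x \<otimes> x) = 0"
    by (rule anti_at[OF ac sk sk])
  moreover have "gr_mult G ?a ?a (x \<otimes> x) = 1"
    using mult_ind1[OF x xx, of ?a] x by (simp add: ind2_def m_assoc[symmetric])
  ultimately have "(2::'r) = 0" by simp
  then show False using two_ne[OF ch] by simp
qed

lemma F2:
  assumes ac: "anticommuting_set G (gr_skew G star \<sigma> :: ('a \<Rightarrow> 'r::comm_ring_1) set)"
    and x: "x \<in> carrier G" and sx: "\<sigma> x = -1" and ne: "star x \<noteq> x"
  shows "(4::'r) = 0"
proof -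
  let ?a = "ind2 x (star x) :: 'a \<Rightarrow> 'r"
  have sk: "?a \<in> gr_skew G star \<sigma>" using ind2_skew[OF x sx] by simp
  have xs: "star x \<in> carrier G" using x by simp
  have zc: "x \<otimes> star x \<in> carrier G" using x by simp
  have "gr_mult G ?a ?a (x \<otimes> star x) + gr_mult G ?a ?a (x \<otimes> star x) = 0"
    by (rule anti_at[OF ac sk sk])
  moreover have "gr_mult G ?a ?a (x \<otimes> star x) = ?a (inv x \<otimes> (x \<otimes> star x)) + ?a (inv (star x) \<otimes> (x \<otimes> star x))"
    by (rule mult_ind2[OF x xs ne[symmetric] zc])
  moreover have "?a (inv x \<otimes> (x \<otimes> star x)) = 1"
    using x xs by (simp add: ind2_def m_assoc[symmetric])
  moreover define q where "q = ?a (inv (star x) \<otimes> (x \<otimes> star x))"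
  ultimately have q2: "(1 + q) + (1 + q) = 0" by simp
  have "q = 0 \<or> q = 1" unfolding q_def ind2_def by auto
  note q1 = this q2
  then have "(2::'r) = 0 \<or> (4::'r) = 0" using q1(2)
  proof (elim disjE)
    assume "q = 0" "(1 + q) + (1 + q) = 0" then show ?thesis by simp
  next
    assume "q = 1" "(1 + q) + (1 + q) = 0"
    then have "(1 + 1) + (1 + 1) = (0::'r)" by simp
    then show ?thesis by simp
  qed
  moreover have "(2::'r) = 0 \<Longrightarrow> (4::'r) = 0"
  proof -
    assume h: "(2::'r) = 0"
    have "(4::'r) = 2 * 2" by simp
    also have "\<dots> = 0" using h by simp
    finally show ?thesis .
  qed
  ultimately show ?thesis by blast
qed

lemma CHAR4:
  assumes "(4::'r::comm_ring_1) = 0" "CHAR('r) \<noteq> 2"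
  shows "CHAR('r) = 4"
proof -
  have "of_nat 4 = (0::'r)" using assms(1) by simp
  then have d: "CHAR('r) dvd 4" using of_nat_eq_0_iff_char_dvd[of 4, where 'a='r] by simp
  then have "CHAR('r) \<le> 4" by (rule dvd_imp_le) simp
  moreover have "CHAR('r) \<noteq> 0"
  proof
    assume "CHAR('r) = 0" then show False using d by simp
  qed
  moreover have "CHAR('r) \<noteq> 3" using d by auto
  moreover have "CHAR('r) \<noteq> 1" using CHAR_not_1[where 'a='r] by simp
  ultimately show ?thesis using assms(2) by linarith
qed

end



context ictx begin

lemma F3:
  assumes ac: "anticommuting_set G (gr_skew G star \<sigma> :: ('a \<Rightarrow> 'r::comm_ring_1) set)"
    and ch4: "CHAR('r) = 4"
    and x: "x \<in> carrier G" and sx: "\<sigma> x = -1" and nx: "star x \<noteq> x"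
    and y: "y \<in> carrier G" and sy: "\<sigma> y = -1" and ny: "star y \<noteq> y"
  shows "x \<otimes> y = star x \<otimes> star y \<and> (x \<otimes> y = y \<otimes> x \<or> x \<otimes> y = star y \<otimes> x)"
proof -
  let ?a = "ind2 x (star x) :: 'a \<Rightarrow> 'r"
  let ?b = "ind2 y (star y) :: 'a \<Rightarrow> 'r"
  have ska: "?a \<in> gr_skew G star \<sigma>" using ind2_skew[OF x sx] by simp
  have skb: "?b \<in> gr_skew G star \<sigma>" using ind2_skew[OF y sy] by simp
  have xs: "star x \<in> carrier G" and ys: "star y \<in> carrier G" using x y by simp_all
  define z where "z = x \<otimes> y"
  have z: "z \<in> carrier G" using x y z_def by simp
  define A where "A = (z = star x \<otimes> star y)"
  define B where "B = (z = y \<otimes> x)"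
  define C where "C = (z = y \<otimes> star x)"
  define D where "D = (z = star y \<otimes> x)"
  define E where "E = (z = star y \<otimes> star x)"
  have m1: "gr_mult G ?a ?b z = ?b (inv x \<otimes> z) + ?b (inv (star x) \<otimes> z)"
    by (rule mult_ind2[OF x xs nx[symmetric] z])
  have m2: "gr_mult G ?b ?a z = ?a (inv y \<otimes> z) + ?a (inv (star y) \<otimes> z)"
    by (rule mult_ind2[OF y ys ny[symmetric] z])
  have b1: "?b (inv x \<otimes> z) = 1"
    unfolding ind2_def z_def using x y by (simp add: m_assoc[symmetric])
  have b2: "?b (inv (star x) \<otimes> z) = of_bool A"
  proof -
    have "inv (star x) \<otimes> z = y \<longleftrightarrow> z = star x \<otimes> y" by (rule inv_solve_left') (use x xs y ys z in auto)
    moreover have "z \<noteq> star x \<otimes> y" using z_def x xs y nx by simp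
    moreover have "inv (star x) \<otimes> z = star y \<longleftrightarrow> A" unfolding A_def by (rule inv_solve_left') (use x xs y ys z in auto)
    ultimately show ?thesis unfolding ind2_def by auto
  qed
  have a1: "?a (inv y \<otimes> z) = of_bool (B \<or> C)"
  proof -
    have "inv y \<otimes> z = x \<longleftrightarrow> B" unfolding B_def by (rule inv_solve_left') (use x xs y ys z in auto)
    moreover have "inv y \<otimes> z = star x \<longleftrightarrow> C" unfolding C_def by (rule inv_solve_left') (use x xs y ys z in auto)
    ultimately show ?thesis unfolding ind2_def by auto
  qed
  have a2: "?a (inv (star y) \<otimes> z) = of_bool (D \<or> E)"
  proof -
    have "inv (star y) \<otimes> z = x \<longleftrightarrow> D" unfolding D_def by (rule inv_solve_left') (use x xs y ys z in auto)
    moreover have "inv (star y) \<otimes> z = star x \<longleftrightarrow> E" unfolding E_def by (rule inv_solve_left') (use x xs y ys z in auto)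
    ultimately show ?thesis unfolding ind2_def by auto
  qed
  have "gr_mult G ?a ?b z + gr_mult G ?b ?a z = 0" by (rule anti_at[OF ac ska skb])
  then have "(1 + of_bool A + of_bool (B \<or> C) + of_bool (D \<or> E) :: 'r) = 0"
    using m1 m2 b1 b2 a1 a2 by (simp add: add.assoc)
  moreover have "of_nat (1 + of_bool A + of_bool (B \<or> C) + of_bool (D \<or> E)) =
      (1 + of_bool A + of_bool (B \<or> C) + of_bool (D \<or> E) :: 'r)"
    by (simp only: of_nat_add of_nat_of_bool of_nat_1)
  ultimately have "of_nat (1 + of_bool A + of_bool (B \<or> C) + of_bool (D \<or> E)) = (0::'r)"
    by simp
  then have "4 dvd (1 + of_bool A + of_bool (B \<or> C) + of_bool (D \<or> E) :: nat)"
    using of_nat_eq_0_iff_char_dvd[where 'a='r] ch4 by metis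
  then have all: "A \<and> (B \<or> C) \<and> (D \<or> E)"
    by (cases A; cases "B \<or> C"; cases "D \<or> E"; simp; presburger)
  have "\<not> (C \<and> E)"
  proof
    assume "C \<and> E"
    then have "y \<otimes> star x = star y \<otimes> star x" unfolding C_def E_def by (elim conjE) (erule subst)
    then show False using y ys xs ny by simp
  qed
  then show ?thesis using all unfolding A_def B_def D_def z_def by blast
qed

end



context group begin

lemma cm_mult:
  assumes "c \<in> carrier G" "u \<in> carrier G" "v \<in> carrier G" "c \<otimes> u = u \<otimes> c" "c \<otimes> v = v \<otimes> c"
  shows "c \<otimes> (u \<otimes> v) = (u \<otimes> v) \<otimes> c"
proof -
  have "c \<otimes> (u \<otimes> v) = (c \<otimes> u) \<otimes> v" using assms(1-3) by (simp add: m_assoc)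
  also have "\<dots> = (u \<otimes> c) \<otimes> v" using assms(4) by simp
  also have "\<dots> = u \<otimes> (c \<otimes> v)" using assms(1-3) by (simp add: m_assoc)
  also have "\<dots> = u \<otimes> (v \<otimes> c)" using assms(5) by simp
  also have "\<dots> = (u \<otimes> v) \<otimes> c" using assms(1-3) by (simp add: m_assoc)
  finally show ?thesis .
qed

lemma cm_inv:
  assumes "c \<in> carrier G" "u \<in> carrier G" "c \<otimes> u = u \<otimes> c"
  shows "c \<otimes> inv u = inv u \<otimes> c"
proof -
  have "(inv u \<otimes> c) \<otimes> u = inv u \<otimes> (u \<otimes> c)" using assms by (simp add: m_assoc)
  also have "\<dots> = (inv u \<otimes> u) \<otimes> c" using assms by (simp add: m_assoc[symmetric])
  also have "\<dots> = c" using assms by simp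
  finally have e: "c = (inv u \<otimes> c) \<otimes> u" by simp
  have "inv u \<otimes> c = c \<otimes> inv u \<longleftrightarrow> c = (inv u \<otimes> c) \<otimes> u"
    by (rule inv_solve_right) (use assms in auto)
  then show ?thesis using e by simp
qed

lemma central_iff: "central_elem G g \<longleftrightarrow> g \<in> carrier G \<and> (\<forall>h\<in>carrier G. g \<otimes> h = h \<otimes> g)"
  unfolding central_elem_def by simp

end

context ictx begin

lemma forward_group:
  assumes x0: "x0 \<in> carrier G" and sx0: "\<sigma> x0 = -1"
    and F1: "\<And>x. x \<in> carrier G \<Longrightarrow> \<sigma> x = -1 \<Longrightarrow> star x \<noteq> x"
    and F3: "\<And>x y. x \<in> carrier G \<Longrightarrow> y \<in> carrier G \<Longrightarrow> \<sigma> x = -1 \<Longrightarrow> \<sigma> y = -1 \<Longrightarrow>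
      x \<otimes> y = star x \<otimes> star y \<and> (x \<otimes> y = y \<otimes> x \<or> x \<otimes> y = star y \<otimes> x)"
  shows "(comm_group G \<and> (\<forall>x\<in>N. star x = x)) \<or>
    (\<exists>s. SLC_group G s \<and> (\<forall>g\<in>carrier G. star g = canonical_involution G s g))"
proof -
  have sx0c: "star x0 \<in> carrier G" using x0 by simp
  define d where "d = inv (star x0) \<otimes> x0"
  have dc: "d \<in> carrier G" using d_def x0 by simp
  have G1: "star y = d \<otimes> y" if y: "y \<in> carrier G" "\<sigma> y = -1" for y
  proof -
    have e: "x0 \<otimes> y = star x0 \<otimes> star y" using F3[OF x0 y(1) sx0 y(2)] by blast
    have "star y = inv (star x0) \<otimes> (x0 \<otimes> y) \<longleftrightarrow> x0 \<otimes> y = star x0 \<otimes> star y"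
      by (rule inv_solve_left) (use x0 y in auto)
    then have "star y = inv (star x0) \<otimes> (x0 \<otimes> y)" using e by simp
    also have "\<dots> = d \<otimes> y" unfolding d_def using x0 y by (simp add: m_assoc)
    finally show ?thesis .
  qed
  have sd: "\<sigma> d = 1" unfolding d_def using x0 sx0 by (simp add: sig_mult sig_inv sig_star)
  have G3: "star n = inv y \<otimes> (n \<otimes> y)"
    if n: "n \<in> carrier G" "\<sigma> n = 1" and y: "y \<in> carrier G" "\<sigma> y = -1" for n y
  proof -
    have ny: "n \<otimes> y \<in> carrier G" "\<sigma> (n \<otimes> y) = -1" using n y by (auto simp: sig_mult)
    have "d \<otimes> (y \<otimes> star n) = (d \<otimes> y) \<otimes> star n" using dc y n by (simp add: m_assoc)
    also have "\<dots> = star y \<otimes> star n" using G1[OF y] by simp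
    also have "\<dots> = star (n \<otimes> y)" using n y by (simp add: star_mult)
    also have "\<dots> = d \<otimes> (n \<otimes> y)" using G1[OF ny] .
    finally have "y \<otimes> star n = n \<otimes> y" using dc y n by simp
    moreover have "star n = inv y \<otimes> (n \<otimes> y) \<longleftrightarrow> n \<otimes> y = y \<otimes> star n"
      by (rule inv_solve_left) (use n y in auto)
    ultimately show ?thesis by simp
  qed
  have G4: "star d = d"
  proof -
    have "star d = star x0 \<otimes> star (inv (star x0))" unfolding d_def using x0 by (simp add: star_mult)
    also have "\<dots> = star x0 \<otimes> inv x0" using x0 by (simp add: star_inv)
    also have "\<dots> = (d \<otimes> x0) \<otimes> inv x0" using G1[OF x0 sx0] by simp
    also have "\<dots> = d" using dc x0 by (simp add: m_assoc)
    finally show ?thesis .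
  qed
  have dcy: "d \<otimes> y = y \<otimes> d" if y: "y \<in> carrier G" "\<sigma> y = -1" for y
  proof -
    have "d = inv y \<otimes> (d \<otimes> y)" using G3[OF dc sd y] G4 by simp
    moreover have "d = inv y \<otimes> (d \<otimes> y) \<longleftrightarrow> d \<otimes> y = y \<otimes> d"
      by (rule inv_solve_left) (use y dc in auto)
    ultimately show ?thesis by simp
  qed
  have decomp: "n = (n \<otimes> x0) \<otimes> inv x0" if "n \<in> carrier G" for n
    using that x0 by (simp add: m_assoc)
  have minus_prod: "\<sigma> (n \<otimes> x0) = -1" "\<sigma> (inv x0) = -1" if "n \<in> carrier G" "\<sigma> n = 1" for n
    using that x0 sx0 by (auto simp: sig_mult sig_inv)
  have odd_central: "central_elem G c"
    if c: "c \<in> carrier G" and h: "\<And>y. y \<in> carrier G \<Longrightarrow> \<sigma> y = -1 \<Longrightarrow> c \<otimes> y = y \<otimes> c" for c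
    unfolding central_iff
  proof (intro conjI ballI)
    show "c \<in> carrier G" by fact
    fix g assume g: "g \<in> carrier G"
    show "c \<otimes> g = g \<otimes> c"
    proof (cases "\<sigma> g = 1")
      case True
      have "c \<otimes> ((g \<otimes> x0) \<otimes> inv x0) = ((g \<otimes> x0) \<otimes> inv x0) \<otimes> c"
        by (rule cm_mult) (use c g x0 h minus_prod[OF g True] in auto)
      then show ?thesis using decomp[OF g] by simp
    next
      case False
      then show ?thesis using h g sig_pm[OF g] by auto
    qed
  qed
  have dcen: "central_elem G d" by (rule odd_central[OF dc dcy])
  have dcomm: "d \<otimes> h = h \<otimes> d" if "h \<in> carrier G" for h
    using dcen that unfolding central_iff by blast
  have dd: "d \<otimes> d = \<one>"
  proof -
    have dx: "d \<otimes> x0 \<in> carrier G" "\<sigma> (d \<otimes> x0) = -1" using dc x0 sd sx0 by (auto simp: sig_mult)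
    have "x0 = star (star x0)" using x0 by simp
    also have "\<dots> = star (d \<otimes> x0)" using G1[OF x0 sx0] by simp
    also have "\<dots> = d \<otimes> (d \<otimes> x0)" using G1[OF dx] .
    also have "\<dots> = (d \<otimes> d) \<otimes> x0" using dc x0 by (simp add: m_assoc)
    finally have "(d \<otimes> d) \<otimes> x0 = x0" by simp
    then show ?thesis using dc x0 by simp
  qed
  have d1: "d \<noteq> \<one>"
  proof
    assume "d = \<one>"
    then have "star x0 = x0" using G1[OF x0 sx0] x0 by simp
    then show False using F1[OF x0 sx0] by simp
  qed
  have G9: "star n = n \<or> star n = d \<otimes> n" if n: "n \<in> carrier G" "\<sigma> n = 1" for n
  proof -
    have nx: "n \<otimes> x0 \<in> carrier G" "\<sigma> (n \<otimes> x0) = -1" using n x0 sx0 by (auto simp: sig_mult)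
    have sn: "star n = inv x0 \<otimes> (n \<otimes> x0)" by (rule G3[OF n x0 sx0])
    have "x0 \<otimes> (n \<otimes> x0) = (n \<otimes> x0) \<otimes> x0 \<or> x0 \<otimes> (n \<otimes> x0) = star (n \<otimes> x0) \<otimes> x0"
      using F3[OF x0 nx(1) sx0 nx(2)] by blast
    then show ?thesis
    proof
      assume "x0 \<otimes> (n \<otimes> x0) = (n \<otimes> x0) \<otimes> x0"
      then have "(x0 \<otimes> n) \<otimes> x0 = (n \<otimes> x0) \<otimes> x0" using n x0 by (simp add: m_assoc)
      then have "x0 \<otimes> n = n \<otimes> x0" using n x0 by simp
      then have "star n = inv x0 \<otimes> (x0 \<otimes> n)" using sn by simp
      then show ?thesis using n x0 by (simp add: m_assoc[symmetric])
    next
      assume "x0 \<otimes> (n \<otimes> x0) = star (n \<otimes> x0) \<otimes> x0"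
      then have "(x0 \<otimes> n) \<otimes> x0 = (d \<otimes> (n \<otimes> x0)) \<otimes> x0" using n x0 G1[OF nx] by (simp add: m_assoc)
      then have e: "x0 \<otimes> n = d \<otimes> (n \<otimes> x0)" using n x0 dc by simp
      have "d \<otimes> (x0 \<otimes> n) = (d \<otimes> d) \<otimes> (n \<otimes> x0)" using e dc n x0 by (simp add: m_assoc)
      then have "n \<otimes> x0 = d \<otimes> (x0 \<otimes> n)" using dd n x0 by simp
      then have "star n = inv x0 \<otimes> (d \<otimes> (x0 \<otimes> n))" using sn by simp
      also have "\<dots> = inv x0 \<otimes> ((x0 \<otimes> n) \<otimes> d)" using dcomm[of "x0 \<otimes> n"] n x0 by simp
      also have "\<dots> = n \<otimes> d" using n x0 dc by (simp add: m_assoc[symmetric])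
      also have "\<dots> = d \<otimes> n" using dcomm[OF n(1)] by simp
      finally show ?thesis by simp
    qed
  qed
  show ?thesis
  proof (cases "comm_group G")
    case True
    interpret cg: comm_group G by (rule True)
    have "\<forall>x\<in>N. star x = x"
    proof
      fix n assume "n \<in> N"
      then have n: "n \<in> carrier G" "\<sigma> n = 1" using inN by auto
      have "star n = inv x0 \<otimes> (x0 \<otimes> n)" using G3[OF n x0 sx0] n x0 cg.m_comm by simp
      then show "star n = n" using n x0 by (simp add: m_assoc[symmetric])
    qed
    then show ?thesis using True by blast
  next
    case ncg: False
    have Z1: "\<not> central_elem G y" if y: "y \<in> carrier G" "\<sigma> y = -1" for y
    proof
      assume cy: "central_elem G y"
      have ycomm: "y \<otimes> h = h \<otimes> y" if "h \<in> carrier G" for h using cy that unfolding central_iff by blast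
      have fixN: "star n = n" if "n \<in> carrier G" "\<sigma> n = 1" for n
      proof -
        have "star n = inv y \<otimes> (n \<otimes> y)" by (rule G3[OF that y])
        also have "\<dots> = inv y \<otimes> (y \<otimes> n)" using ycomm[OF that(1)] by simp
        also have "\<dots> = n" using that y by (simp add: m_assoc[symmetric])
        finally show ?thesis .
      qed
      have NN: "n \<otimes> m = m \<otimes> n" if "n \<in> carrier G" "\<sigma> n = 1" "m \<in> carrier G" "\<sigma> m = 1" for n m
      proof -
        have nm: "n \<otimes> m \<in> carrier G" "\<sigma> (n \<otimes> m) = 1" using that by (auto simp: sig_mult)
        have "n \<otimes> m = star (n \<otimes> m)" using fixN[OF nm] by simp
        also have "\<dots> = star m \<otimes> star n" using that by (simp add: star_mult)
        also have "\<dots> = m \<otimes> n" using fixN that by simp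
        finally show ?thesis .
      qed
      have yd: "g = y \<otimes> (inv y \<otimes> g)" if "g \<in> carrier G" for g
        using that y by (simp add: m_assoc[symmetric])
      have Nany: "n \<otimes> g = g \<otimes> n" if n: "n \<in> carrier G" "\<sigma> n = 1" and g: "g \<in> carrier G" for n g
      proof (cases "\<sigma> g = 1")
        case True then show ?thesis using NN n g by blast
      next
        case False
        then have sg: "\<sigma> g = -1" using sig_pm[OF g] by auto
        have ig: "inv y \<otimes> g \<in> carrier G" "\<sigma> (inv y \<otimes> g) = 1" using y g sg by (auto simp: sig_mult sig_inv)
        have "n \<otimes> (y \<otimes> (inv y \<otimes> g)) = (y \<otimes> (inv y \<otimes> g)) \<otimes> n"
          by (rule cm_mult) (use n y ig ycomm[OF n(1)] NN[OF n ig] in auto)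
        then show ?thesis using yd[OF g] by simp
      qed
      have "comm_group G"
      proof (rule group_comm_groupI)
        fix a b assume a: "a \<in> carrier G" and b: "b \<in> carrier G"
        show "a \<otimes> b = b \<otimes> a"
        proof (cases "\<sigma> a = 1")
          case True then show ?thesis using Nany a b by blast
        next
          case False
          then have sa: "\<sigma> a = -1" using sig_pm[OF a] by auto
          have ia: "inv y \<otimes> a \<in> carrier G" "\<sigma> (inv y \<otimes> a) = 1" using y a sa by (auto simp: sig_mult sig_inv)
          have "b \<otimes> (y \<otimes> (inv y \<otimes> a)) = (y \<otimes> (inv y \<otimes> a)) \<otimes> b"
            by (rule cm_mult) (use b y ia ycomm[OF b] Nany[OF ia b] in auto)
          then show ?thesis using yd[OF a] by simp
        qed
      qed
      then show False using ncg by simp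
    qed
    have can: "star g = (if central_elem G g then g else d \<otimes> g)" if g: "g \<in> carrier G" for g
    proof (cases "central_elem G g")
      case True
      then have "\<sigma> g = 1" using Z1 g sig_pm[OF g] by auto
      then have "star g = inv x0 \<otimes> (g \<otimes> x0)" using G3 g x0 sx0 by blast
      also have "\<dots> = inv x0 \<otimes> (x0 \<otimes> g)" using True x0 unfolding central_iff by metis
      also have "\<dots> = g" using g x0 by (simp add: m_assoc[symmetric])
      finally show ?thesis using True by simp
    next
      case False
      show ?thesis
      proof (cases "\<sigma> g = 1")
        case s1: True
        have "star g \<noteq> g"
        proof
          assume sg: "star g = g"
          have "central_elem G g"
          proof (rule odd_central[OF g])
            fix y assume y: "y \<in> carrier G" "\<sigma> y = -1"
            have "g = inv y \<otimes> (g \<otimes> y)" using G3[OF g s1 y] sg by simp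
            moreover have "g = inv y \<otimes> (g \<otimes> y) \<longleftrightarrow> g \<otimes> y = y \<otimes> g"
              by (rule inv_solve_left) (use y g in auto)
            ultimately show "g \<otimes> y = y \<otimes> g" by simp
          qed
          then show False using False by simp
        qed
        then show ?thesis using G9[OF g s1] False by simp
      next
        case s2: False
        then show ?thesis using G1[OF g] False sig_pm[OF g] by auto
      qed
    qed
    have st_nc: "star (a \<otimes> b) = b \<otimes> a"
      if a: "a \<in> carrier G" and b: "b \<in> carrier G" and an: "\<not> central_elem G a" and bn: "\<not> central_elem G b" for a b
    proof -
      have "star (a \<otimes> b) = star b \<otimes> star a" using a b by (simp add: star_mult)
      also have "\<dots> = (d \<otimes> b) \<otimes> (d \<otimes> a)" using can[OF a] can[OF b] an bn by simp
      also have "\<dots> = (d \<otimes> d) \<otimes> (b \<otimes> a)"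
      proof -
        have "(d \<otimes> b) \<otimes> (d \<otimes> a) = d \<otimes> ((b \<otimes> d) \<otimes> a)" using dc a b by (simp add: m_assoc)
        also have "\<dots> = d \<otimes> ((d \<otimes> b) \<otimes> a)" using dcomm[OF b] by simp
        also have "\<dots> = (d \<otimes> d) \<otimes> (b \<otimes> a)" using dc a b by (simp add: m_assoc)
        finally show ?thesis .
      qed
      also have "\<dots> = b \<otimes> a" using dd a b by simp
      finally show ?thesis .
    qed
    have cmd: "a \<otimes> b = b \<otimes> a \<or> a \<otimes> b = d \<otimes> (b \<otimes> a)
        \<and> \<not> central_elem G a \<and> \<not> central_elem G b \<and> \<not> central_elem G (a \<otimes> b)"
      if a: "a \<in> carrier G" and b: "b \<in> carrier G" for a b
    proof (cases "central_elem G a \<or> central_elem G b")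
      case True
      then have "a \<otimes> b = b \<otimes> a" using a b unfolding central_iff by metis
      then show ?thesis by simp
    next
      case False
      then have an: "\<not> central_elem G a" and bn: "\<not> central_elem G b" by auto
      have ab: "a \<otimes> b \<in> carrier G" using a b by simp
      have st: "star (a \<otimes> b) = b \<otimes> a" by (rule st_nc[OF a b an bn])
      show ?thesis
      proof (cases "central_elem G (a \<otimes> b)")
        case True
        then show ?thesis using st can[OF ab] by simp
      next
        case abn: False
        then have "d \<otimes> (a \<otimes> b) = b \<otimes> a" using st can[OF ab] by simp
        then have "d \<otimes> (d \<otimes> (a \<otimes> b)) = d \<otimes> (b \<otimes> a)" by simp
        then have "a \<otimes> b = d \<otimes> (b \<otimes> a)" using dd dc ab by (simp add: m_assoc[symmetric])
        then show ?thesis using an bn abn by simp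
      qed
    qed
    have commut: "group_commutator G a b = (if a \<otimes> b = b \<otimes> a then \<one> else d)"
      if a: "a \<in> carrier G" and b: "b \<in> carrier G" for a b
    proof -
      have cc: "group_commutator G a b \<in> carrier G" using a b unfolding group_commutator_def by simp
      have dec: "a \<otimes> b = (b \<otimes> a) \<otimes> group_commutator G a b" by (rule comm_decomp[OF a b])
      show ?thesis
      proof (cases "a \<otimes> b = b \<otimes> a")
        case True
        then have "(b \<otimes> a) \<otimes> group_commutator G a b = b \<otimes> a" using dec by simp
        then show ?thesis using True cc a b by simp
      next
        case False
        then have "a \<otimes> b = d \<otimes> (b \<otimes> a)" using cmd[OF a b] by blast
        also have "\<dots> = (b \<otimes> a) \<otimes> d" using dcomm[of "b \<otimes> a"] a b by simp
        finally have "(b \<otimes> a) \<otimes> group_commutator G a b = (b \<otimes> a) \<otimes> d" using dec by simp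
        then show ?thesis using False cc a b dc by simp
      qed
    qed
    obtain a b where a: "a \<in> carrier G" and b: "b \<in> carrier G" and nab: "a \<otimes> b \<noteq> b \<otimes> a"
      using ncg group_comm_groupI by blast
    have "SLC_group G d"
      unfolding SLC_group_def
    proof (intro conjI ballI impI)
      show "d \<in> carrier G" by fact
      show "d \<noteq> \<one>" by fact
      show "{group_commutator G g h | g h. g \<in> carrier G \<and> h \<in> carrier G} = {\<one>, d}"
      proof
        show "{group_commutator G g h | g h. g \<in> carrier G \<and> h \<in> carrier G} \<subseteq> {\<one>, d}"
          using commut by auto
        have "\<one> = group_commutator G \<one> \<one>" using commut[of \<one> \<one>] by simp
        moreover have "d = group_commutator G a b" using commut[OF a b] nab by simp
        ultimately show "{\<one>, d} \<subseteq> {group_commutator G g h | g h. g \<in> carrier G \<and> h \<in> carrier G}"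
          using a b by blast
      qed
      fix g h assume g: "g \<in> carrier G" and h: "h \<in> carrier G" and gh: "g \<otimes> h = h \<otimes> g"
      show "central_elem G g \<or> central_elem G h \<or> central_elem G (g \<otimes> h)"
      proof (rule ccontr)
        assume nc: "\<not> (central_elem G g \<or> central_elem G h \<or> central_elem G (g \<otimes> h))"
        have gn: "\<not> central_elem G g" and hn: "\<not> central_elem G h" and ghn: "\<not> central_elem G (g \<otimes> h)"
          using nc by auto
        have "d \<otimes> (g \<otimes> h) = star (g \<otimes> h)" using can[of "g \<otimes> h"] g h ghn by simp
        also have "\<dots> = h \<otimes> g" by (rule st_nc[OF g h gn hn])
        finally have "d \<otimes> (g \<otimes> h) = h \<otimes> g" .
        then have "d \<otimes> (g \<otimes> h) = g \<otimes> h" using gh by simp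
        then show False using d1 dc g h by simp
      qed
    qed
    then show ?thesis using can unfolding canonical_involution_def by blast
  qed
qed

end



theorem mainTheorem1:
  fixes G :: "('g, 'b) monoid_scheme"
    and star :: "'g \<Rightarrow> 'g"
    and \<sigma> :: "'g \<Rightarrow> int"
    and N :: "'g set"
  assumes grp: "group G"
    and inv: "group_involution G star"
    and ori: "orientation G \<sigma>"
    and nontriv: "\<exists>g\<in>carrier G. \<sigma> g \<noteq> 1"
    and N_def: "N = {g \<in> carrier G. \<sigma> g = 1}"
    and compat: "\<forall>g\<in>carrier G. \<sigma> (star g) = \<sigma> g"
    and char: "CHAR('r::comm_ring_1) \<noteq> 2"
  shows "anticommuting_set G (gr_skew G star \<sigma> :: ('g \<Rightarrow> 'r) set) \<longleftrightarrow>
      (CHAR('r) = 4 \<and> comm_group G \<and> (\<forall>x\<in>N. star x = x) \<and>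
         (\<forall>x\<in>carrier G - N. star x \<noteq> x))
    \<or> (CHAR('r) = 4 \<and>
         (\<exists>s. SLC_group G s \<and> (\<forall>g\<in>carrier G. star g = canonical_involution G s g)) \<and>
         (\<forall>x\<in>carrier G - N. star x \<noteq> x))"
proof -
  interpret ictx G star \<sigma> N
    using grp inv ori N_def compat by (simp add: ictx_def ictx_axioms_def)
  obtain x0 where x0: "x0 \<in> carrier G" and sx0: "\<sigma> x0 = -1"
    using nontriv sig_pm by blast
  show ?thesis
  proof
    assume ac: "anticommuting_set G (gr_skew G star \<sigma> :: ('g \<Rightarrow> 'r) set)"
    have f1: "star x \<noteq> x" if "x \<in> carrier G" "\<sigma> x = -1" for x
      by (rule F1[OF ac char that])
    have four: "(4::'r) = 0" by (rule F2[OF ac x0 sx0 f1[OF x0 sx0]])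
    have ch4: "CHAR('r) = 4" by (rule CHAR4[OF four char])
    have f3: "x \<otimes>\<^bsub>G\<^esub> y = star x \<otimes>\<^bsub>G\<^esub> star y \<and> (x \<otimes>\<^bsub>G\<^esub> y = y \<otimes>\<^bsub>G\<^esub> x \<or> x \<otimes>\<^bsub>G\<^esub> y = star y \<otimes>\<^bsub>G\<^esub> x)"
      if "x \<in> carrier G" "y \<in> carrier G" "\<sigma> x = -1" "\<sigma> y = -1" for x y
      by (rule F3[OF ac ch4 that(1,3) f1[OF that(1,3)] that(2,4) f1[OF that(2,4)]])
    have nf: "\<forall>x\<in>carrier G - N. star x \<noteq> x" using f1 notN by blast
    show "(CHAR('r) = 4 \<and> comm_group G \<and> (\<forall>x\<in>N. star x = x) \<and> (\<forall>x\<in>carrier G - N. star x \<noteq> x))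
      \<or> (CHAR('r) = 4 \<and> (\<exists>s. SLC_group G s \<and> (\<forall>g\<in>carrier G. star g = canonical_involution G s g)) \<and>
         (\<forall>x\<in>carrier G - N. star x \<noteq> x))"
      using forward_group[OF x0 sx0 f1 f3] ch4 nf by blast
  next
    assume h: "(CHAR('r) = 4 \<and> comm_group G \<and> (\<forall>x\<in>N. star x = x) \<and> (\<forall>x\<in>carrier G - N. star x \<noteq> x))
      \<or> (CHAR('r) = 4 \<and> (\<exists>s. SLC_group G s \<and> (\<forall>g\<in>carrier G. star g = canonical_involution G s g)) \<and>
         (\<forall>x\<in>carrier G - N. star x \<noteq> x))"
    have four: "(4::'r) = 0" if "CHAR('r) = 4"
    proof -
      have "of_nat CHAR('r) = (0::'r)" by (rule of_nat_CHAR)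
      then show ?thesis using that by simp
    qed
    show "anticommuting_set G (gr_skew G star \<sigma> :: ('g \<Rightarrow> 'r) set)"
      using h
    proof
      assume c1: "CHAR('r) = 4 \<and> comm_group G \<and> (\<forall>x\<in>N. star x = x) \<and> (\<forall>x\<in>carrier G - N. star x \<noteq> x)"
      show ?thesis using conv1[OF four] c1 by blast
    next
      assume c2: "CHAR('r) = 4 \<and> (\<exists>s. SLC_group G s \<and> (\<forall>g\<in>carrier G. star g = canonical_involution G s g)) \<and>
         (\<forall>x\<in>carrier G - N. star x \<noteq> x)"
      then obtain s where "SLC_group G s" "\<forall>g\<in>carrier G. star g = canonical_involution G s g" by blast
      then show ?thesis using conv2[OF four] c2 by blast
    qed
  qed
qed



end
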